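(* Let $d\ge 1$, let $p=p_d=\frac{2d+1}{4d}$, and let $(S_n)$ be the $d$-dimensional elephant random walk with memory parameter $p$ described in the context. Then $$\lim_{n\to\infty}\frac{1}{\sqrt n\,\log n}S_n=0\quad\text{a.s.}$$
   Context: Multi-dimensional elephant random walk (MERW). Fix a dimension $d\ge1$ and a memory parameter $p\in[0,1]$. Let $(e_1,\dots,e_d)$ be the standard basis of $\mathbb{R}^d$, $I_d$ the $d\times d$ identity matrix, and $J_d$ the $d\times d$ cyclic permutation matrix with entries $(J_d)_{i,i+1}=1$ for $1\le i\le d-1$, $(J_d)_{d,1}=1$, and all other entries $0$. Set $S_0=0$. The first step $X_1$ is uniformly distributed on $\{\pm e_1,\dots,\pm e_d\}$. For $n\ge1$, given $\mathcal{F}_n=\sigma(X_1,\dots,X_n)$, $X_{n+1}=A_nX_{b_n}$, where $b_n$ is uniform on $\{1,\dots,n\}$ and $A_n$ is a random matrix, with $b_n$, $A_n$ independent of each other and of $\mathcal{F}_n$, equal to $I_d$ with probability $p$ and to each of $-I_d,\ \pm J_d,\dots,\pm J_d^{d-1}$ with probability $\frac{1-p}{2d-1}$. The position is $S_n=X_1+\dots+X_n$. *)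

theory Defs
  imports "HOL-Probability.Probability"
begin

text \<open>Vectors of R^d are represented as functions nat => real, coordinates 0..d-1
  (coordinate i corresponds to e_(i+1) of the paper); d x d matrices as
  nat => nat => real with indices 0..d-1.\<close>

type_synonym vec = "nat \<Rightarrow> real"
type_synonym mat = "nat \<Rightarrow> nat \<Rightarrow> real"

definition basis_vec :: "nat \<Rightarrow> vec" where
  "basis_vec j = (\<lambda>i. if i = j then 1 else 0)"

definition id_mat :: "nat \<Rightarrow> mat" where
  "id_mat d = (\<lambda>i j. if i = j \<and> i < d then 1 else 0)"

definition cyc_mat :: "nat \<Rightarrow> mat" where
  "cyc_mat d = (\<lambda>i j. if i < d \<and> j = (i + 1) mod d then 1 else 0)"

definition mat_mult :: "nat \<Rightarrow> mat \<Rightarrow> mat \<Rightarrow> mat" where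
  "mat_mult d A B = (\<lambda>i j. \<Sum>l<d. A i l * B l j)"

fun mat_pow :: "nat \<Rightarrow> mat \<Rightarrow> nat \<Rightarrow> mat" where
  "mat_pow d A 0 = id_mat d"
| "mat_pow d A (Suc k) = mat_mult d A (mat_pow d A k)"

definition mat_scale :: "real \<Rightarrow> mat \<Rightarrow> mat" where
  "mat_scale c A = (\<lambda>i j. c * A i j)"

definition mat_vec :: "nat \<Rightarrow> mat \<Rightarrow> vec \<Rightarrow> vec" where
  "mat_vec d A v = (\<lambda>i. \<Sum>j<d. A i j * v j)"

definition vnorm :: "nat \<Rightarrow> vec \<Rightarrow> real" where
  "vnorm d v = sqrt (\<Sum>i<d. (v i)\<^sup>2)"

definition first_pmf :: "nat \<Rightarrow> vec pmf" where
  "first_pmf d = pmf_of_set {(\<lambda>i. s * basis_vec j i) | s j. s \<in> {-1, 1} \<and> j < d}"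

text \<open>Law of A_n: I_d with probability p, and each of -I_d, +-J_d, ..., +-J_d^(d-1)
  (2d-1 matrices, indexed by (sign, power)) with probability (1-p)/(2d-1).\<close>
definition A_pmf :: "nat \<Rightarrow> real \<Rightarrow> mat pmf" where
  "A_pmf d p = do {
     c \<leftarrow> bernoulli_pmf p;
     if c then return_pmf (id_mat d)
     else map_pmf (\<lambda>(s, k). mat_scale s (mat_pow d (cyc_mat d) k))
            (pmf_of_set ({(-1, 0)} \<union> ({-1, 1} \<times> {1..<d})))
   }"

text \<open>Innovation at time n >= 1: the pair (b_n, A_n), independent, b_n uniform on {1..n}.
  (Index 0 is unused; it is given a harmless well-defined law.)\<close>
definition step_pmf :: "nat \<Rightarrow> real \<Rightarrow> nat \<Rightarrow> (nat \<times> mat) pmf" where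
  "step_pmf d p n = pair_pmf (pmf_of_set {1..max 1 n}) (A_pmf d p)"

definition merw_space :: "nat \<Rightarrow> real \<Rightarrow> (vec \<times> (nat \<Rightarrow> nat \<times> mat)) measure" where
  "merw_space d p = measure_pmf (first_pmf d) \<Otimes>\<^sub>M (\<Pi>\<^sub>M n\<in>UNIV. measure_pmf (step_pmf d p n))"

text \<open>merw_steps d w n = [X_1, ..., X_n], with X_(n+1) = A_n X_(b_n).\<close>
fun merw_steps :: "nat \<Rightarrow> vec \<times> (nat \<Rightarrow> nat \<times> mat) \<Rightarrow> nat \<Rightarrow> vec list" where
  "merw_steps d w 0 = []"
| "merw_steps d w (Suc 0) = [fst w]"
| "merw_steps d w (Suc (Suc n)) =
     (let xs = merw_steps d w (Suc n); (b, A) = snd w (Suc n)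
      in xs @ [mat_vec d A (xs ! (b - 1))])"

definition merw_pos :: "nat \<Rightarrow> vec \<times> (nat \<Rightarrow> nat \<times> mat) \<Rightarrow> nat \<Rightarrow> vec" where
  "merw_pos d w n = (\<lambda>i. \<Sum>x\<leftarrow>merw_steps d w n. x i)"

end

theory Submission
  imports Defs "HOL-Probability.Hoeffding" "HOL-Real_Asymp.Real_Asymp"
begin


lemma ifmult: "(if P then 1 else 0) * (x::real) = (if P then x else 0)" by simp

definition sbv :: "nat \<Rightarrow> vec \<Rightarrow> bool" where
  "sbv d v \<longleftrightarrow> (\<exists>s l. (s = 1 \<or> s = -1) \<and> l < d \<and> v = (\<lambda>i. s * basis_vec l i))"

lemma mat_vec_id:
  assumes "sbv d v" shows "mat_vec d (id_mat d) v = v"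
proof
  fix i
  obtain s l where sl: "s = 1 \<or> s = -1" "l < d" "v = (\<lambda>i. s * basis_vec l i)"
    using assms unfolding sbv_def by blast
  have "mat_vec d (id_mat d) v i = (\<Sum>j<d. (if i = j \<and> i < d then 1 else 0) * v j)"
    by (simp add: mat_vec_def id_mat_def)
  also have "\<dots> = (if i < d then v i else 0)"
    by (simp add: ifmult sum.delta eq_commute[of i])
  also have "\<dots> = v i" using sl by (auto simp: basis_vec_def)
  finally show "mat_vec d (id_mat d) v i = v i" .
qed

lemma mat_vec_mult: "mat_vec d (mat_mult d A B) v = mat_vec d A (mat_vec d B v)"
proof
  fix i
  have "mat_vec d (mat_mult d A B) v i = (\<Sum>j<d. (\<Sum>l<d. A i l * B l j) * v j)"
    by (simp add: mat_vec_def mat_mult_def)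
  also have "\<dots> = (\<Sum>j<d. \<Sum>l<d. A i l * (B l j * v j))"
    by (simp add: sum_distrib_right mult.assoc)
  also have "\<dots> = (\<Sum>l<d. \<Sum>j<d. A i l * (B l j * v j))"
    by (rule sum.swap)
  also have "\<dots> = mat_vec d A (mat_vec d B v) i"
    by (simp add: mat_vec_def sum_distrib_left)
  finally show "mat_vec d (mat_mult d A B) v i = mat_vec d A (mat_vec d B v) i" .
qed

lemma mat_vec_scale: "mat_vec d (mat_scale c A) v = (\<lambda>i. c * mat_vec d A v i)"
  by (simp add: mat_vec_def mat_scale_def sum_distrib_left mult.assoc)

lemma mat_vec_smult: "mat_vec d A (\<lambda>i. c * v i) = (\<lambda>i. c * mat_vec d A v i)"
  by (simp add: mat_vec_def sum_distrib_left mult.left_commute)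

lemma mat_vec_id_basis: "l < d \<Longrightarrow> mat_vec d (id_mat d) (basis_vec l) = basis_vec l"
  using mat_vec_id[of d "\<lambda>i. 1 * basis_vec l i"] unfolding sbv_def by force

lemma mat_vec_cyc_basis:
  assumes "l < d" shows "mat_vec d (cyc_mat d) (basis_vec l) = basis_vec ((l + d - 1) mod d)"
proof
  fix i
  have d0: "d > 0" using assms by simp
  have "mat_vec d (cyc_mat d) (basis_vec l) i =
        (\<Sum>j<d. (if i < d \<and> j = (i + 1) mod d then 1 else 0) * basis_vec l j)"
    by (simp add: mat_vec_def cyc_mat_def)
  also have "\<dots> = (if i < d then basis_vec l ((i + 1) mod d) else 0)"
    using d0 by (simp add: ifmult sum.delta' conj_commute[of "i < d"] del: if_image_distrib)
  also have "\<dots> = basis_vec ((l + d - 1) mod d) i"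
  proof (cases "i < d")
    case True
    show ?thesis
    proof (cases "i + 1 < d")
      case True2: True
      have "(l + d - 1) mod d = (if l = 0 then d - 1 else l - 1)"
        using assms by (cases l) auto
      then show ?thesis using True True2 assms
        by (auto simp: basis_vec_def)
    next
      case False
      then have "i = d - 1" using True by simp
      have "(l + d - 1) mod d = (if l = 0 then d - 1 else l - 1)"
        using assms by (cases l) auto
      then show ?thesis using assms d0 \<open>i = d - 1\<close> by (auto simp: basis_vec_def)
    qed
  next
    case False
    then show ?thesis using d0 by (auto simp: basis_vec_def)
  qed
  finally show "mat_vec d (cyc_mat d) (basis_vec l) i = basis_vec ((l + d - 1) mod d) i" .
qed

lemma mat_pow_basis:
  assumes "l < d" shows "\<exists>l'<d. mat_vec d (mat_pow d (cyc_mat d) k) (basis_vec l) = basis_vec l'"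
proof (induction k)
  case 0
  then show ?case using assms mat_vec_id_basis by auto
next
  case (Suc k)
  then obtain l' where l': "l' < d" "mat_vec d (mat_pow d (cyc_mat d) k) (basis_vec l) = basis_vec l'" by blast
  then have "mat_vec d (mat_pow d (cyc_mat d) (Suc k)) (basis_vec l) = basis_vec ((l' + d - 1) mod d)"
    by (simp add: mat_vec_mult mat_vec_cyc_basis)
  moreover have "(l' + d - 1) mod d < d" using l' by simp
  ultimately show ?case by blast
qed

lemma A_pmf_cases:
  assumes "A \<in> set_pmf (A_pmf d p)"
  shows "A = id_mat d \<or> (\<exists>s k. (s = 1 \<or> s = -1) \<and> A = mat_scale s (mat_pow d (cyc_mat d) k))"
proof -
  have fin: "finite ({(-1::real, 0::nat)} \<union> ({-1, 1} \<times> {1..<d}))" by simp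
  show ?thesis using assms unfolding A_pmf_def
    by (auto simp: set_pmf_of_set[OF _ fin] split: if_splits) (metis mat_pow.simps(1))
qed

lemma sbv_step:
  assumes "A \<in> set_pmf (A_pmf d p)" "sbv d v"
  shows "sbv d (mat_vec d A v)"
proof -
  obtain s l where sl: "s = 1 \<or> s = -1" "l < d" "v = (\<lambda>i. s * basis_vec l i)"
    using assms(2) unfolding sbv_def by blast
  from A_pmf_cases[OF assms(1)] show ?thesis
  proof
    assume "A = id_mat d" then show ?thesis using mat_vec_id assms by simp
  next
    assume "\<exists>s k. (s = 1 \<or> s = -1) \<and> A = mat_scale s (mat_pow d (cyc_mat d) k)"
    then obtain t k where tk: "t = 1 \<or> t = -1" "A = mat_scale t (mat_pow d (cyc_mat d) k)" by blast
    obtain l' where l': "l' < d" "mat_vec d (mat_pow d (cyc_mat d) k) (basis_vec l) = basis_vec l'"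
      using mat_pow_basis[OF sl(2)] by blast
    have "mat_vec d A v = (\<lambda>i. (t * s) * basis_vec l' i)"
      using tk sl l' by (simp add: mat_vec_scale mat_vec_smult mult_ac)
    moreover have "t * s = 1 \<or> t * s = -1" using tk sl by auto
    ultimately show ?thesis using l' unfolding sbv_def by blast
  qed
qed

lemma sbv_bound: "sbv d v \<Longrightarrow> \<bar>v i\<bar> \<le> 1"
  unfolding sbv_def basis_vec_def by auto

definition Sset :: "nat \<Rightarrow> (real \<times> nat) set" where
  "Sset d = {(-1, 0)} \<union> ({-1, 1} \<times> {1..<d})"

lemma Sset_fin: "finite (Sset d)" and Sset_ne: "Sset d \<noteq> {}"
  by (auto simp: Sset_def)

lemma A_pmf_alt: "A_pmf d p = bernoulli_pmf p \<bind> (\<lambda>c. if c then return_pmf (id_mat d)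
            else map_pmf (\<lambda>(s, k). mat_scale s (mat_pow d (cyc_mat d) k)) (pmf_of_set (Sset d)))"
  unfolding A_pmf_def Sset_def by simp

lemma A_pmf_finite: "finite (set_pmf (A_pmf d p))"
  unfolding A_pmf_alt set_bind_pmf
  by (rule finite_UN_I) (auto simp: Sset_fin Sset_ne)

lemma card_Sset: "d \<ge> 1 \<Longrightarrow> real (card (Sset d)) = 2 * real d - 1"
proof -
  assume d: "d \<ge> 1"
  have "(-1::real, 0::nat) \<notin> {-1, 1} \<times> {1..<d}" by simp
  then have "card (Sset d) = Suc (card ({-1::real, 1} \<times> {1..<d}))"
    unfolding Sset_def by simp
  also have "card ({-1::real, 1} \<times> {1..<d}) = 2 * (d - 1)"
    by (simp add: card_cartesian_product)
  finally show ?thesis using d by (simp add: of_nat_diff)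
qed

lemma sum_Sset: "(\<Sum>x\<in>Sset d. (case x of (s, k) \<Rightarrow> s * f k)) = - f 0"
proof -
  have "(-1::real, 0::nat) \<notin> {-1, 1} \<times> {1..<d}" by simp
  then have "(\<Sum>x\<in>Sset d. (case x of (s, k) \<Rightarrow> s * f k)) =
     - f 0 + (\<Sum>x\<in>{-1::real, 1} \<times> {1..<d}. (case x of (s, k) \<Rightarrow> s * f k))"
    unfolding Sset_def by simp
  also have "(\<Sum>x\<in>{-1::real, 1} \<times> {1..<d}. (case x of (s, k) \<Rightarrow> s * f k)) =
     (\<Sum>s\<in>{-1::real, 1}. \<Sum>k\<in>{1..<d}. s * f k)"
    by (simp add: sum.cartesian_product)
  also have "\<dots> = 0" by (simp add: sum_negf)
  finally show ?thesis by simp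
qed

lemma A_expect:
  assumes d: "d \<ge> 1"
  shows "measure_pmf.expectation (A_pmf d ((2 * real d + 1) / (4 * real d))) (\<lambda>A. A i j) = id_mat d i j / 2"
proof -
  define p where "p = (2 * real d + 1) / (4 * real d)"
  have p0: "0 \<le> p" "p \<le> 1" using d by (auto simp: p_def field_simps)
  have fin: "\<And>c. finite (set_pmf (if c then return_pmf (id_mat d)
            else map_pmf (\<lambda>(s, k). mat_scale s (mat_pow d (cyc_mat d) k)) (pmf_of_set (Sset d))))"
    by (auto simp: Sset_fin Sset_ne)
  have "measure_pmf.expectation (A_pmf d p) (\<lambda>A. A i j) =
    (\<Sum>c\<in>UNIV. pmf (bernoulli_pmf p) c *\<^sub>R measure_pmf.expectation (if c then return_pmf (id_mat d)
            else map_pmf (\<lambda>(s, k). mat_scale s (mat_pow d (cyc_mat d) k)) (pmf_of_set (Sset d))) (\<lambda>A. A i j))"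
    unfolding A_pmf_alt by (rule pmf_expectation_bind) (auto simp: fin)
  also have "\<dots> = p * id_mat d i j + (1 - p) * ((\<Sum>x\<in>Sset d. (case x of (s, k) \<Rightarrow> s * mat_pow d (cyc_mat d) k i j)) / card (Sset d))"
    using p0 by (simp add: UNIV_bool integral_pmf_of_set[OF Sset_ne Sset_fin] mat_scale_def case_prod_unfold)
  also have "\<dots> = p * id_mat d i j - (1 - p) * id_mat d i j / (2 * real d - 1)"
    using d by (simp add: sum_Sset card_Sset)
  also have "\<dots> = id_mat d i j / 2"
    using d by (simp add: p_def field_simps)
  finally show ?thesis by (simp add: p_def)
qed



definition nxt :: "nat \<Rightarrow> vec \<times> (nat \<Rightarrow> nat \<times> mat) \<Rightarrow> nat \<Rightarrow> vec" where
  "nxt d w n = mat_vec d (snd (snd w n)) (merw_steps d w n ! (fst (snd w n) - 1))"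

lemma merw_steps_Suc:
  "n \<ge> 1 \<Longrightarrow> merw_steps d w (Suc n) = merw_steps d w n @ [nxt d w n]"
  by (cases n) (auto simp: nxt_def Let_def split: prod.split)

lemma merw_steps_length: "length (merw_steps d w n) = n"
proof (induction n)
  case 0 then show ?case by simp
next
  case (Suc n) then show ?case by (cases "n = 0") (auto simp: merw_steps_Suc)
qed

lemma merw_steps_prefix: "j < n \<Longrightarrow> n \<le> m \<Longrightarrow> merw_steps d w m ! j = merw_steps d w n ! j"
proof (induction m)
  case 0 then show ?case by simp
next
  case (Suc m)
  show ?case
  proof (cases "n = Suc m")
    case True then show ?thesis by simp
  next
    case False
    then have "n \<le> m" "m \<ge> 1" using Suc by auto
    then show ?thesis using Suc by (simp add: merw_steps_Suc nth_append merw_steps_length)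
  qed
qed

lemma merw_steps_local:
  "fst w = fst w' \<Longrightarrow> (\<And>j. j < n \<Longrightarrow> snd w j = snd w' j) \<Longrightarrow> merw_steps d w n = merw_steps d w' n"
proof (induction n)
  case 0 then show ?case by simp
next
  case (Suc n)
  show ?case
  proof (cases "n = 0")
    case True then show ?thesis using Suc by simp
  next
    case False
    then have "merw_steps d w n = merw_steps d w' n" using Suc by auto
    moreover have "snd w n = snd w' n" using Suc by auto
    ultimately show ?thesis using False by (simp add: merw_steps_Suc nxt_def)
  qed
qed

lemma merw_pos_sum: "merw_pos d w n i = (\<Sum>j<n. (merw_steps d w n ! j) i)"
  unfolding merw_pos_def
  by (simp add: sum_list_sum_nth merw_steps_length atLeast0LessThan)

lemma merw_pos_one: "merw_pos d w (Suc 0) i = fst w i"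
  by (simp add: merw_pos_def)

lemma merw_pos_Suc: "n \<ge> 1 \<Longrightarrow> merw_pos d w (Suc n) i = merw_pos d w n i + nxt d w n i"
  by (simp add: merw_pos_def merw_steps_Suc)

definition upd :: "vec \<times> (nat \<Rightarrow> nat \<times> mat) \<Rightarrow> nat \<Rightarrow> nat \<times> mat \<Rightarrow> vec \<times> (nat \<Rightarrow> nat \<times> mat)" where
  "upd w n y = (fst w, (snd w)(n := y))"

lemma merw_steps_upd: "k \<le> n \<Longrightarrow> merw_steps d (upd w n y) k = merw_steps d w k"
  by (rule merw_steps_local) (auto simp: upd_def)

lemma merw_pos_upd: "k \<le> n \<Longrightarrow> merw_pos d (upd w n y) k = merw_pos d w k"
  by (simp add: merw_pos_def merw_steps_upd)

lemma nxt_upd: "nxt d (upd w n y) n = mat_vec d (snd y) (merw_steps d w n ! (fst y - 1))"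
  by (simp add: nxt_def merw_steps_upd) (simp add: upd_def)

definition good :: "nat \<Rightarrow> real \<Rightarrow> vec \<times> (nat \<Rightarrow> nat \<times> mat) \<Rightarrow> bool" where
  "good d p w \<longleftrightarrow> fst w \<in> set_pmf (first_pmf d) \<and> (\<forall>n. snd w n \<in> set_pmf (step_pmf d p n))"

lemma first_set_eq:
  "{(\<lambda>i. s * basis_vec j i) | s j. s \<in> {-1, 1} \<and> j < d} = (\<lambda>(s, j). (\<lambda>i. s * basis_vec j i)) ` ({-1::real, 1} \<times> {..<d})"
  by auto

lemma first_set: "d \<ge> 1 \<Longrightarrow> set_pmf (first_pmf d) = {(\<lambda>i. s * basis_vec j i) | s j. s \<in> {-1, 1} \<and> j < d}"
  unfolding first_pmf_def
  by (rule set_pmf_of_set) (simp_all only: first_set_eq, auto simp: lessThan_empty_iff)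

lemma first_sbv: "d \<ge> 1 \<Longrightarrow> x \<in> set_pmf (first_pmf d) \<Longrightarrow> sbv d x"
  by (auto simp: first_set sbv_def)

lemma step_set: "set_pmf (step_pmf d p n) = {1..max 1 n} \<times> set_pmf (A_pmf d p)"
  by (simp add: step_pmf_def set_pmf_of_set)

lemma good_sbv:
  assumes "d \<ge> 1" "good d p w"
  shows "j < n \<Longrightarrow> sbv d (merw_steps d w n ! j)"
proof (induction n arbitrary: j)
  case 0 then show ?case by simp
next
  case (Suc n)
  show ?case
  proof (cases "n = 0")
    case True
    then show ?thesis using Suc assms first_sbv by (auto simp: good_def)
  next
    case False
    show ?thesis
    proof (cases "j < n")
      case True
      then show ?thesis using Suc False by (simp add: merw_steps_Suc nth_append merw_steps_length)
    next
      case False2: False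
      then have j: "j = n" using Suc by simp
      have st: "snd w n \<in> {1..max 1 n} \<times> set_pmf (A_pmf d p)"
        using assms step_set[of d p n] by (auto simp: good_def)
      then have "fst (snd w n) - 1 < n" using False by (auto simp: mem_Times_iff)
      then have "sbv d (merw_steps d w n ! (fst (snd w n) - 1))" using Suc by blast
      then have "sbv d (nxt d w n)"
        unfolding nxt_def using st by (intro sbv_step) (auto simp: mem_Times_iff)
      then show ?thesis using j False by (simp add: merw_steps_Suc nth_append merw_steps_length)
    qed
  qed
qed



abbreviation Ms :: "nat \<Rightarrow> real \<Rightarrow> nat \<Rightarrow> (nat \<times> mat) measure" where
  "Ms d p n \<equiv> measure_pmf (step_pmf d p n)"

abbreviation PiS :: "nat \<Rightarrow> real \<Rightarrow> (nat \<Rightarrow> nat \<times> mat) measure" where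
  "PiS d p \<equiv> PiM UNIV (Ms d p)"

lemma prob_PiS: "prob_space (PiS d p)"
  by (rule prob_space_PiM) (rule prob_space_measure_pmf)

lemma prob_merw: "prob_space (merw_space d p)"
  unfolding merw_space_def
  by (intro prob_space_pair prob_space_measure_pmf prob_PiS)

lemma coord_meas: "(\<lambda>w. snd w n) \<in> measurable (merw_space d p) (Ms d p n)"
  unfolding merw_space_def
  by (rule measurable_compose[OF measurable_snd measurable_component_singleton]) simp

lemma meas_snd: "(\<lambda>w. h (snd w n)) \<in> borel_measurable (merw_space d p)"
  by (rule measurable_compose[OF coord_meas]) simp

lemma meas_fst: "(\<lambda>w. h (fst w)) \<in> borel_measurable (merw_space d p)"
  unfolding merw_space_def
  by (rule measurable_compose[OF measurable_fst]) simp

lemma nth_out: "length xs \<le> i \<Longrightarrow> xs ! i = [] ! (i - length xs)"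
proof (induction xs arbitrary: i)
  case Nil then show ?case by simp
next
  case (Cons a xs) then show ?case by (cases i) auto
qed

lemma steps_meas:
  "j < n \<Longrightarrow> (\<lambda>w. (merw_steps d w n ! j) l) \<in> borel_measurable (merw_space d p)"
proof (induction n arbitrary: j l)
  case 0 then show ?case by simp
next
  case (Suc n)
  show ?case
  proof (cases "n = 0")
    case True
    then show ?thesis using Suc meas_fst[of "\<lambda>x. x l"] by simp
  next
    case False
    show ?thesis
    proof (cases "j < n")
      case True
      then show ?thesis using Suc False by (simp add: merw_steps_Suc nth_append merw_steps_length)
    next
      case False2: False
      then have j: "j = n" using Suc by simp
      have sel: "(\<lambda>w. (merw_steps d w n ! (fst (snd w n) - 1)) m) \<in> borel_measurable (merw_space d p)" for m
      proof (rule measurable_compose_countable[where f = "\<lambda>k w. (merw_steps d w n ! (k - 1)) m"])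
        fix k :: nat
        show "(\<lambda>w. (merw_steps d w n ! (k - 1)) m) \<in> borel_measurable (merw_space d p)"
        proof (cases "k - 1 < n")
          case True then show ?thesis using Suc by blast
        next
          case False
          then have "(\<lambda>w. (merw_steps d w n ! (k - 1)) m) = (\<lambda>w. ([] ! (k - 1 - n)) m)"
            by (intro ext) (subst nth_out, simp_all add: merw_steps_length)
          then show ?thesis by simp
        qed
      next
        show "(\<lambda>w. fst (snd w n)) \<in> measurable (merw_space d p) (count_space UNIV)"
          by (rule measurable_compose[OF coord_meas]) simp
      qed
      have "(\<lambda>w. nxt d w n l) = (\<lambda>w. \<Sum>m<d. snd (snd w n) l m * (merw_steps d w n ! (fst (snd w n) - 1)) m)"
        by (simp add: nxt_def mat_vec_def)
      also have "\<dots> \<in> borel_measurable (merw_space d p)"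
        using sel by (intro borel_measurable_sum borel_measurable_times meas_snd) auto
      finally show ?thesis using j False by (simp add: merw_steps_Suc nth_append merw_steps_length)
    qed
  qed
qed

lemma pos_meas: "(\<lambda>w. merw_pos d w n i) \<in> borel_measurable (merw_space d p)"
  unfolding merw_pos_sum by (intro borel_measurable_sum steps_meas) auto

lemma pair_ps: "pair_prob_space (measure_pmf (first_pmf d)) (PiS d p)"
  by (simp add: pair_prob_space_def pair_sigma_finite_def prob_PiS prob_space_imp_sigma_finite prob_space_measure_pmf)

lemma pair_ps2: "pair_prob_space (Ms d p n) (PiS d p)"
  by (simp add: pair_prob_space_def pair_sigma_finite_def prob_PiS prob_space_imp_sigma_finite prob_space_measure_pmf)

lemma upd_meas: "(\<lambda>(w, y). upd w n y) \<in> measurable (merw_space d p \<Otimes>\<^sub>M Ms d p n) (merw_space d p)"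
proof -
  have "(\<lambda>z. (snd (fst z)) (n := snd z)) \<in> measurable (merw_space d p \<Otimes>\<^sub>M Ms d p n) (PiS d p)"
    by (rule measurable_fun_upd[where J = UNIV]) (auto simp: merw_space_def)
  then show ?thesis
    unfolding upd_def merw_space_def case_prod_unfold
    by (intro measurable_Pair) auto
qed

lemma decomp:
  fixes F :: "_ \<Rightarrow> ennreal"
  assumes F[measurable]: "F \<in> borel_measurable (merw_space d p)"
  shows "(\<integral>\<^sup>+ w. F w \<partial>merw_space d p) = (\<integral>\<^sup>+ w. (\<integral>\<^sup>+ y. F (upd w n y) \<partial>Ms d p n) \<partial>merw_space d p)"
proof -
  let ?M0 = "measure_pmf (first_pmf d)"
  interpret A: pair_prob_space ?M0 "PiS d p" by (rule pair_ps)
  interpret B: pair_prob_space "Ms d p n" "PiS d p" by (rule pair_ps2)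
  have F2[measurable]: "F \<in> borel_measurable (?M0 \<Otimes>\<^sub>M PiS d p)" using F by (simp add: merw_space_def)
  have D: "distr (Ms d p n \<Otimes>\<^sub>M PiS d p) (PiS d p) (\<lambda>(y, X). X(n := y)) = PiS d p"
    using distr_pair_PiM_eq_PiM[of UNIV "Ms d p" n] by (simp add: prob_space_measure_pmf)
  have T[measurable]: "(\<lambda>(y, X). X(n := y)) \<in> measurable (Ms d p n \<Otimes>\<^sub>M PiS d p) (PiS d p)"
  proof -
    have "(\<lambda>x. (snd x)(n := fst x)) \<in> measurable (Ms d p n \<Otimes>\<^sub>M PiS d p) (PiS d p)"
      by (rule measurable_fun_upd[where J = UNIV]) auto
    then show ?thesis by (simp add: case_prod_unfold)
  qed
  have G[measurable]: "(\<lambda>(w, y). F (upd w n y)) \<in> borel_measurable (merw_space d p \<Otimes>\<^sub>M Ms d p n)"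
    using measurable_compose[OF upd_meas F] by (simp add: case_prod_unfold)
  have G2: "(\<lambda>w. \<integral>\<^sup>+ y. F (upd w n y) \<partial>Ms d p n) \<in> borel_measurable (?M0 \<Otimes>\<^sub>M PiS d p)"
    using sigma_finite_measure.borel_measurable_nn_integral[OF prob_space_imp_sigma_finite[OF prob_space_measure_pmf] G] by (simp add: merw_space_def)
  have inner: "(\<integral>\<^sup>+ f. F (x, f) \<partial>PiS d p) = (\<integral>\<^sup>+ X. (\<integral>\<^sup>+ y. F (upd (x, X) n y) \<partial>Ms d p n) \<partial>PiS d p)" for x
  proof -
    have Fx[measurable]: "(\<lambda>f. F (x, f)) \<in> borel_measurable (PiS d p)" by measurable
    have "(\<integral>\<^sup>+ f. F (x, f) \<partial>PiS d p) = (\<integral>\<^sup>+ f. F (x, f) \<partial>distr (Ms d p n \<Otimes>\<^sub>M PiS d p) (PiS d p) (\<lambda>(y, X). X(n := y)))"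
      by (simp only: D)
    also have "\<dots> = (\<integral>\<^sup>+ z. F (x, (case z of (y, X) \<Rightarrow> X(n := y))) \<partial>(Ms d p n \<Otimes>\<^sub>M PiS d p))"
      by (rule nn_integral_distr[OF T]) (simp add: Fx)
    also have "\<dots> = (\<integral>\<^sup>+ X. (\<integral>\<^sup>+ y. F (x, X(n := y)) \<partial>Ms d p n) \<partial>PiS d p)"
      by (subst B.nn_integral_snd[symmetric]) (auto simp: case_prod_unfold)
    finally show ?thesis by (simp add: upd_def)
  qed
  have "(\<integral>\<^sup>+ w. F w \<partial>merw_space d p) = (\<integral>\<^sup>+ x. \<integral>\<^sup>+ f. F (x, f) \<partial>PiS d p \<partial>?M0)"
    unfolding merw_space_def by (rule A.M2.nn_integral_fst[OF F2, symmetric])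
  also have "\<dots> = (\<integral>\<^sup>+ x. \<integral>\<^sup>+ X. (\<integral>\<^sup>+ y. F (upd (x, X) n y) \<partial>Ms d p n) \<partial>PiS d p \<partial>?M0)"
    by (simp only: inner)
  also have "\<dots> = (\<integral>\<^sup>+ w. (\<integral>\<^sup>+ y. F (upd w n y) \<partial>Ms d p n) \<partial>merw_space d p)"
    unfolding merw_space_def using A.M2.nn_integral_fst[OF G2] by simp
  finally show ?thesis .
qed

lemma AE_good: "AE w in merw_space d p. good d p w"
proof -
  let ?M0 = "measure_pmf (first_pmf d)"
  interpret A: pair_prob_space ?M0 "PiS d p" by (rule pair_ps)
  have 1: "AE w in ?M0 \<Otimes>\<^sub>M PiS d p. fst w \<in> set_pmf (first_pmf d)"
  proof (rule A.AE_pair_measure)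
    show "{x \<in> space (?M0 \<Otimes>\<^sub>M PiS d p). fst x \<in> set_pmf (first_pmf d)} \<in> sets (?M0 \<Otimes>\<^sub>M PiS d p)"
      using measurable_sets[OF measurable_fst, of "set_pmf (first_pmf d)" ?M0 "PiS d p"]
      by (simp add: vimage_def Int_def conj_commute)
    show "AE x in ?M0. AE y in PiS d p. fst (x, y) \<in> set_pmf (first_pmf d)"
      using AE_measure_pmf[of "first_pmf d"] by simp
  qed
  have 2: "AE w in ?M0 \<Otimes>\<^sub>M PiS d p. snd w n \<in> set_pmf (step_pmf d p n)" for n
  proof (rule A.AE_pair_measure)
    show "{x \<in> space (?M0 \<Otimes>\<^sub>M PiS d p). snd x n \<in> set_pmf (step_pmf d p n)} \<in> sets (?M0 \<Otimes>\<^sub>M PiS d p)"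
      using measurable_sets[OF coord_meas, of "set_pmf (step_pmf d p n)" d p n]
      by (simp add: vimage_def Int_def conj_commute merw_space_def)
    have "AE y in PiS d p. y n \<in> set_pmf (step_pmf d p n)"
      by (rule AE_PiM_component) (auto simp: prob_space_measure_pmf AE_measure_pmf)
    then show "AE x in ?M0. AE y in PiS d p. snd (x, y) n \<in> set_pmf (step_pmf d p n)"
      by simp
  qed
  have "AE w in ?M0 \<Otimes>\<^sub>M PiS d p. \<forall>n. snd w n \<in> set_pmf (step_pmf d p n)"
    using 2 by (simp add: AE_all_countable)
  with 1 show ?thesis unfolding good_def merw_space_def by eventually_elim auto
qed



lemma step_finite: "finite (set_pmf (step_pmf d p n))"
  by (simp add: step_set A_pmf_finite)

lemma E_mat_vec:
  assumes d: "d \<ge> 1" and i: "i < d"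
  shows "measure_pmf.expectation (A_pmf d ((2 * real d + 1) / (4 * real d))) (\<lambda>A. mat_vec d A v i) = v i / 2"
proof -
  let ?A = "A_pmf d ((2 * real d + 1) / (4 * real d))"
  have int: "integrable (measure_pmf ?A) (\<lambda>A. A i j * v j)" for j
    by (rule integrable_measure_pmf_finite) (rule A_pmf_finite)
  have "measure_pmf.expectation ?A (\<lambda>A. mat_vec d A v i) = (\<Sum>j<d. measure_pmf.expectation ?A (\<lambda>A. A i j * v j))"
    unfolding mat_vec_def by (rule Bochner_Integration.integral_sum) (rule int)
  also have "\<dots> = (\<Sum>j<d. id_mat d i j / 2 * v j)"
    by (simp only: integral_mult_left_zero A_expect[OF d])
  also have "\<dots> = v i / 2"
  proof -
    have "\<And>j. id_mat d i j / 2 * v j = (if i = j then v j / 2 else 0)" using i by (simp add: id_mat_def)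
    then show ?thesis using i by (simp add: sum.delta)
  qed
  finally show ?thesis .
qed

lemma sum_shift1: "(\<Sum>b\<in>{1..n}. g (b - 1)) = (\<Sum>j<n. g (j::nat))"
  by (induction n) auto

lemma E_xi:
  assumes d: "d \<ge> 1" and i: "i < d" and n: "n \<ge> 1"
  shows "measure_pmf.expectation (step_pmf d ((2 * real d + 1) / (4 * real d)) n)
           (\<lambda>y. mat_vec d (snd y) (xs ! (fst y - 1)) i) = (\<Sum>j<n. (xs ! j) i) / (2 * n)"
proof -
  let ?p = "(2 * real d + 1) / (4 * real d)"
  let ?A = "A_pmf d ?p"
  have mx: "max 1 n = n" using n by simp
  have bind: "bind_pmf ?A (\<lambda>A. return_pmf (b, A)) = map_pmf (Pair b) ?A" for b
    by (simp add: map_pmf_def)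
  have "measure_pmf.expectation (step_pmf d ?p n) (\<lambda>y. mat_vec d (snd y) (xs ! (fst y - 1)) i) =
        (\<Sum>b\<in>{1..n}. measure_pmf.expectation (bind_pmf ?A (\<lambda>A. return_pmf (b, A)))
            (\<lambda>y. mat_vec d (snd y) (xs ! (fst y - 1)) i) /\<^sub>R real (card {1..n}))"
    unfolding step_pmf_def pair_pmf_def mx
    by (rule pmf_expectation_bind_pmf_of_set) (use n A_pmf_finite in auto)
  also have "\<dots> = (\<Sum>b\<in>{1..n}. (xs ! (b - 1)) i / (2 * n))"
    by (intro sum.cong refl, simp only: bind integral_map_pmf, simp add: E_mat_vec[OF d i]; simp add: field_simps)
  also have "\<dots> = (\<Sum>j<n. (xs ! j) i / (2 * n))"
    by (rule sum_shift1)
  also have "\<dots> = (\<Sum>j<n. (xs ! j) i) / (2 * n)"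
    by (simp add: sum_divide_distrib)
  finally show ?thesis .
qed

abbreviation p0 :: "nat \<Rightarrow> real" where "p0 d \<equiv> (2 * real d + 1) / (4 * real d)"

fun gam :: "nat \<Rightarrow> real" where
  "gam 0 = 1"
| "gam (Suc n) = gam n * (if n = 0 then 1 else 1 + 1 / (2 * real n))"

lemma gam_pos: "gam n > 0"
proof (induction n)
  case (Suc n)
  have "(if n = 0 then 1 else 1 + 1 / (2 * real n)) > (0::real)" by (simp add: add_pos_nonneg)
  then show ?case using Suc by simp
qed simp

lemma gam_bounds: "n \<ge> 1 \<Longrightarrow> real n \<le> (gam n)\<^sup>2 \<and> (gam n)\<^sup>2 \<le> 2 * real n - 1/2"
proof (induction n rule: nat_induct_at_least)
  case base then show ?case by simp
next
  case (Suc n)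
  let ?g = "gam n"
  have n: "real n \<ge> 1" using Suc by simp
  have eq: "(gam (Suc n))\<^sup>2 = ?g\<^sup>2 * (1 + 1 / real n + 1 / (4 * (real n)\<^sup>2))"
    using Suc n by (simp add: power2_eq_square field_simps)
  have f1: "1 + 1 / real n + 1 / (4 * (real n)\<^sup>2) \<ge> 0" using n by simp
  have lo: "real n * (1 + 1 / real n + 1 / (4 * (real n)\<^sup>2)) \<ge> real n + 1"
    using n by (simp add: field_simps)
  have hi: "(2 * real n - 1/2) * (1 + 1 / real n + 1 / (4 * (real n)\<^sup>2)) \<le> 2 * real n + 3/2"
    using n by (simp add: field_simps power2_eq_square)
  have "real (Suc n) \<le> (gam (Suc n))\<^sup>2"
    using lo mult_right_mono[OF conjunct1[OF Suc.IH] f1] eq by simp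
  moreover have "(gam (Suc n))\<^sup>2 \<le> 2 * real (Suc n) - 1/2"
    using hi mult_right_mono[OF conjunct2[OF Suc.IH] f1] eq by simp
  ultimately show ?case by blast
qed

lemma hoeff_step:
  assumes d: "d \<ge> 1" and i: "i < d" and n: "n \<ge> 1" and len: "length xs = n"
    and sb: "\<And>j. j < n \<Longrightarrow> sbv d (xs ! j)" and l: "l > 0" and sg: "\<sigma> = 1 \<or> \<sigma> = -1"
  shows "(\<integral>\<^sup>+ y. ennreal (exp (l * (\<sigma> * ((\<Sum>j<n. (xs ! j) i) + mat_vec d (snd y) (xs ! (fst y - 1)) i) / gam (Suc n)
            - \<sigma> * (\<Sum>j<n. (xs ! j) i) / gam n))) \<partial>Ms d (p0 d) n)
         \<le> ennreal (exp (l\<^sup>2 / (2 * (gam (Suc n))\<^sup>2)))"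
proof -
  define Y where "Y = (\<Sum>j<n. (xs ! j) i)"
  define g where "g = gam n"
  define g' where "g' = gam (Suc n)"
  have gp: "g > 0" "g' > 0" unfolding g_def g'_def by (rule gam_pos)+
  have g'g: "g' = g * (1 + 1 / (2 * real n))" using n by (simp add: g_def g'_def)
  define xi where "xi = (\<lambda>y::nat \<times> mat. mat_vec d (snd y) (xs ! (fst y - 1)) i)"
  define f where "f = (\<lambda>y. \<sigma> * (Y + xi y) / g')"
  have xib: "\<bar>xi y\<bar> \<le> 1" if "y \<in> set_pmf (step_pmf d (p0 d) n)" for y
  proof -
    have y: "fst y \<in> {1..n}" "snd y \<in> set_pmf (A_pmf d (p0 d))"
      using that n by (auto simp: step_set mem_Times_iff)
    then have "sbv d (xs ! (fst y - 1))" using sb by auto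
    then have "sbv d (mat_vec d (snd y) (xs ! (fst y - 1)))" using y sbv_step by blast
    then show ?thesis unfolding xi_def by (rule sbv_bound)
  qed
  interpret H: interval_bounded_random_variable "Ms d (p0 d) n" f "\<sigma> * Y / g' - 1 / g'" "\<sigma> * Y / g' + 1 / g'"
  proof unfold_locales
    show "f \<in> borel_measurable (Ms d (p0 d) n)" by simp
    show "AE x in Ms d (p0 d) n. f x \<in> {\<sigma> * Y / g' - 1 / g'..\<sigma> * Y / g' + 1 / g'}"
    proof (subst AE_measure_pmf_iff, intro ballI)
      fix y assume y: "y \<in> set_pmf (step_pmf d (p0 d) n)"
      have "\<bar>\<sigma> * xi y\<bar> \<le> 1" using xib[OF y] sg by auto
      then have "- 1 \<le> \<sigma> * xi y" "\<sigma> * xi y \<le> 1" by auto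
      then have "- 1 / g' \<le> \<sigma> * xi y / g'" "\<sigma> * xi y / g' \<le> 1 / g'"
        using gp divide_right_mono[of "-1" "\<sigma> * xi y" g'] divide_right_mono[of "\<sigma> * xi y" 1 g'] by auto
      then show "f y \<in> {\<sigma> * Y / g' - 1 / g'..\<sigma> * Y / g' + 1 / g'}"
        unfolding f_def by (auto simp: distrib_left add_divide_distrib)
    qed
  qed
  have intxi: "integrable (Ms d (p0 d) n) xi"
    by (rule integrable_measure_pmf_finite) (rule step_finite)
  have Exi: "measure_pmf.expectation (step_pmf d (p0 d) n) xi = Y / (2 * n)"
    unfolding xi_def Y_def by (rule E_xi[OF d i n])
  have Ef: "measure_pmf.expectation (step_pmf d (p0 d) n) f = \<sigma> * Y / g"
  proof -
    have "measure_pmf.expectation (step_pmf d (p0 d) n) f = \<sigma> * (Y + Y / (2 * n)) / g'"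
      unfolding f_def using intxi Exi by (simp add: Bochner_Integration.integral_add)
    also have "\<dots> = \<sigma> * Y / g" using gp n g'g by (simp add: field_simps)
    finally show ?thesis .
  qed
  have "(\<integral>\<^sup>+ y. ennreal (exp (l * (f y - \<sigma> * Y / g))) \<partial>Ms d (p0 d) n)
      \<le> ennreal (exp (l\<^sup>2 * ((\<sigma> * Y / g' + 1 / g') - (\<sigma> * Y / g' - 1 / g'))\<^sup>2 / 8))"
    using H.Hoeffdings_lemma_nn_integral[OF l] Ef by simp
  also have "l\<^sup>2 * ((\<sigma> * Y / g' + 1 / g') - (\<sigma> * Y / g' - 1 / g'))\<^sup>2 / 8 = l\<^sup>2 / (2 * g'\<^sup>2)"
    using gp by (simp add: field_simps power2_eq_square)
  finally show ?thesis by (simp add: f_def xi_def Y_def g_def g'_def)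
qed



definition ZZ :: "nat \<Rightarrow> nat \<Rightarrow> nat \<Rightarrow> vec \<times> (nat \<Rightarrow> nat \<times> mat) \<Rightarrow> real" where
  "ZZ d i n w = merw_pos d w n i / gam n"

lemma ZZ_meas[measurable]: "(\<lambda>w. ZZ d i n w) \<in> borel_measurable (merw_space d p)"
  unfolding ZZ_def using pos_meas by measurable

lemma ZZ_upd: "k \<le> n \<Longrightarrow> ZZ d i k (upd w n y) = ZZ d i k w"
  by (simp add: ZZ_def merw_pos_upd)

lemma ZZ_Suc_upd: "n \<ge> 1 \<Longrightarrow> ZZ d i (Suc n) (upd w n y) =
   ((\<Sum>j<n. (merw_steps d w n ! j) i) + mat_vec d (snd y) (merw_steps d w n ! (fst y - 1)) i) / gam (Suc n)"
proof -
  assume n: "n \<ge> 1"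
  have "merw_pos d (upd w n y) (Suc n) i = merw_pos d w n i + mat_vec d (snd y) (merw_steps d w n ! (fst y - 1)) i"
    using merw_pos_Suc[OF n, of d "upd w n y" i] merw_pos_upd[of n n d w y] nxt_upd by simp
  then show ?thesis unfolding ZZ_def by (subst \<open>merw_pos d (upd w n y) (Suc n) i = _\<close>) (simp add: merw_pos_sum)
qed

lemma ZZ_alt: "ZZ d i n w = (\<Sum>j<n. (merw_steps d w n ! j) i) / gam n"
  by (simp add: ZZ_def merw_pos_sum)

lemma mgf_bound:
  assumes d: "d \<ge> 1" and i: "i < d" and m: "m \<ge> 1" and mn: "m \<le> n" and l: "l > 0" and sg: "\<sigma> = 1 \<or> \<sigma> = -1"
  shows "(\<integral>\<^sup>+ w. ennreal (exp (l * (\<sigma> * ZZ d i n w - \<sigma> * ZZ d i m w))) \<partial>merw_space d (p0 d))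
          \<le> ennreal (exp (l\<^sup>2 / 2 * (\<Sum>k\<in>{m<..n}. 1 / real k)))"
  using mn
proof (induction n rule: dec_induct)
  case base
  interpret prob_space "merw_space d (p0 d)" by (rule prob_merw)
  show ?case by (simp add: emeasure_space_1)
next
  case (step n)
  let ?P = "merw_space d (p0 d)"
  interpret prob_space ?P by (rule prob_merw)
  have n1: "n \<ge> 1" using step m by simp
  define c where "c = exp (l\<^sup>2 / (2 * (gam (Suc n))\<^sup>2))"
  let ?F = "\<lambda>w. ennreal (exp (l * (\<sigma> * ZZ d i (Suc n) w - \<sigma> * ZZ d i m w)))"
  let ?E = "\<lambda>w. ennreal (exp (l * (\<sigma> * ZZ d i n w - \<sigma> * ZZ d i m w)))"
  have Fm: "?F \<in> borel_measurable ?P" by measurable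
  have "(\<integral>\<^sup>+ w. ?F w \<partial>?P) = (\<integral>\<^sup>+ w. (\<integral>\<^sup>+ y. ?F (upd w n y) \<partial>Ms d (p0 d) n) \<partial>?P)"
    by (rule decomp[OF Fm])
  also have "\<dots> \<le> (\<integral>\<^sup>+ w. ?E w * c \<partial>?P)"
  proof (rule nn_integral_mono_AE)
    show "AE w in ?P. (\<integral>\<^sup>+ y. ?F (upd w n y) \<partial>Ms d (p0 d) n) \<le> ?E w * c"
      using AE_good
    proof eventually_elim
      case (elim w)
      let ?xs = "merw_steps d w n"
      let ?Y = "\<Sum>j<n. (?xs ! j) i"
      have sb: "\<And>j. j < n \<Longrightarrow> sbv d (?xs ! j)" using good_sbv[OF d elim] by blast
      have split: "?F (upd w n y) = ?E w * ennreal (exp (l * (\<sigma> * (?Y + mat_vec d (snd y) (?xs ! (fst y - 1)) i) / gam (Suc n)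
            - \<sigma> * ?Y / gam n)))" for y
      proof -
        have "l * (\<sigma> * ZZ d i (Suc n) (upd w n y) - \<sigma> * ZZ d i m (upd w n y)) =
          l * (\<sigma> * ZZ d i n w - \<sigma> * ZZ d i m w) + l * (\<sigma> * (?Y + mat_vec d (snd y) (?xs ! (fst y - 1)) i) / gam (Suc n)
            - \<sigma> * ?Y / gam n)"
          using step n1 by (simp add: ZZ_upd ZZ_Suc_upd ZZ_alt[of d i n w] algebra_simps)
        then show ?thesis by (simp add: exp_add ennreal_mult)
      qed
      have "(\<integral>\<^sup>+ y. ?F (upd w n y) \<partial>Ms d (p0 d) n) = ?E w * (\<integral>\<^sup>+ y. ennreal (exp (l * (\<sigma> * (?Y + mat_vec d (snd y) (?xs ! (fst y - 1)) i) / gam (Suc n)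
            - \<sigma> * ?Y / gam n))) \<partial>Ms d (p0 d) n)"
        by (simp only: split, rule nn_integral_cmult) simp
      also have "\<dots> \<le> ?E w * c"
        unfolding c_def
        by (intro mult_left_mono hoeff_step[OF d i n1 merw_steps_length sb l sg]) auto
      finally show ?case .
    qed
  qed
  also have "\<dots> = (\<integral>\<^sup>+ w. ?E w \<partial>?P) * c"
    by (rule nn_integral_multc) measurable
  also have "\<dots> \<le> ennreal (exp (l\<^sup>2 / 2 * (\<Sum>k\<in>{m<..n}. 1 / real k))) * c"
    by (intro mult_right_mono step.IH) auto
  also have "\<dots> \<le> ennreal (exp (l\<^sup>2 / 2 * (\<Sum>k\<in>{m<..Suc n}. 1 / real k)))"
  proof -
    have "(gam (Suc n))\<^sup>2 \<ge> real (Suc n)" using gam_bounds[of "Suc n"] by simp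
    then have "1 / (gam (Suc n))\<^sup>2 \<le> 1 / real (Suc n)"
      using gam_pos[of "Suc n"] by (intro divide_left_mono) (simp_all del: gam.simps)
    then have "l\<^sup>2 / (2 * (gam (Suc n))\<^sup>2) \<le> l\<^sup>2 / 2 * (1 / real (Suc n))"
      using mult_left_mono[of "1 / (gam (Suc n))\<^sup>2" "1 / real (Suc n)" "l\<^sup>2 / 2"] by (simp add: field_simps)
    moreover have "{m<..Suc n} = insert (Suc n) {m<..n}" using step by auto
    ultimately have "l\<^sup>2 / 2 * (\<Sum>k\<in>{m<..n}. 1 / real k) + l\<^sup>2 / (2 * (gam (Suc n))\<^sup>2)
        \<le> l\<^sup>2 / 2 * (\<Sum>k\<in>{m<..Suc n}. 1 / real k)"
      by (simp add: distrib_left)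
    then show ?thesis unfolding c_def
      by (simp add: ennreal_mult[symmetric] exp_add[symmetric] del: ennreal_mult)
  qed
  finally show ?case .
qed



lemma tail_one:
  assumes d: "d \<ge> 1" and i: "i < d" and m: "m \<ge> 1" and mn: "m \<le> n" and t: "t > 0" and W: "W > 0"
    and V: "(\<Sum>k\<in>{m<..n}. 1 / real k) \<le> W" and sg: "\<sigma> = 1 \<or> \<sigma> = -1"
  shows "emeasure (merw_space d (p0 d)) {w \<in> space (merw_space d (p0 d)). t \<le> \<sigma> * ZZ d i n w - \<sigma> * ZZ d i m w}
          \<le> ennreal (exp (- (t\<^sup>2 / (2 * W))))"
proof -
  let ?P = "merw_space d (p0 d)"
  define l where "l = t / W"
  have l: "l > 0" using t W by (simp add: l_def)
  define u where "u = (\<lambda>w. ennreal (exp (l * (\<sigma> * ZZ d i n w - \<sigma> * ZZ d i m w))))"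
  define c where "c = ennreal (exp (- (l * t)))"
  have um: "(\<lambda>w. u w * indicator (space ?P) w) \<in> borel_measurable ?P"
    unfolding u_def by measurable
  have sub: "{w \<in> space ?P. t \<le> \<sigma> * ZZ d i n w - \<sigma> * ZZ d i m w} \<subseteq> {w \<in> space ?P. 1 \<le> c * u w}"
  proof safe
    fix w assume "t \<le> \<sigma> * ZZ d i n w - \<sigma> * ZZ d i m w"
    then have "l * t \<le> l * (\<sigma> * ZZ d i n w - \<sigma> * ZZ d i m w)" using l by simp
    then have "1 \<le> exp (- (l * t)) * exp (l * (\<sigma> * ZZ d i n w - \<sigma> * ZZ d i m w))"
      by (simp add: exp_add[symmetric])
    then show "1 \<le> c * u w" unfolding c_def u_def
      by (simp add: ennreal_mult[symmetric] ennreal_1[symmetric] del: ennreal_1)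
  qed
  have "emeasure ?P {w \<in> space ?P. t \<le> \<sigma> * ZZ d i n w - \<sigma> * ZZ d i m w} \<le> emeasure ?P {w \<in> space ?P. 1 \<le> c * u w}"
    by (rule emeasure_mono[OF sub]) (unfold u_def, measurable)
  also have "\<dots> \<le> c * (\<integral>\<^sup>+ w. u w * indicator (space ?P) w \<partial>?P)"
    by (rule nn_integral_Markov_inequality[OF um]) simp
  also have "(\<integral>\<^sup>+ w. u w * indicator (space ?P) w \<partial>?P) = (\<integral>\<^sup>+ w. u w \<partial>?P)"
    by (rule nn_integral_cong) simp
  also have "\<dots> \<le> ennreal (exp (l\<^sup>2 / 2 * (\<Sum>k\<in>{m<..n}. 1 / real k)))"
    unfolding u_def by (rule mgf_bound[OF d i m mn l sg])
  also have "\<dots> \<le> ennreal (exp (l\<^sup>2 / 2 * W))"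
    using V by (intro ennreal_leI) (simp add: mult_left_mono)
  finally have "emeasure ?P {w \<in> space ?P. t \<le> \<sigma> * ZZ d i n w - \<sigma> * ZZ d i m w} \<le> c * ennreal (exp (l\<^sup>2 / 2 * W))"
    by (simp add: mult_left_mono)
  also have "c * ennreal (exp (l\<^sup>2 / 2 * W)) = ennreal (exp (- (t\<^sup>2 / (2 * W))))"
  proof -
    have "- (l * t) + l\<^sup>2 / 2 * W = - (t\<^sup>2 / (2 * W))"
      using W by (simp add: l_def field_simps power2_eq_square)
    then show ?thesis unfolding c_def
      by (simp add: ennreal_mult[symmetric] exp_add[symmetric] del: ennreal_mult)
  qed
  finally show ?thesis .
qed

lemma tail_abs:
  assumes d: "d \<ge> 1" and i: "i < d" and m: "m \<ge> 1" and mn: "m \<le> n" and t: "t > 0" and W: "W > 0"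
    and V: "(\<Sum>k\<in>{m<..n}. 1 / real k) \<le> W"
  shows "measure (merw_space d (p0 d)) {w \<in> space (merw_space d (p0 d)). t \<le> \<bar>ZZ d i n w - ZZ d i m w\<bar>}
          \<le> 2 * exp (- (t\<^sup>2 / (2 * W)))"
proof -
  let ?P = "merw_space d (p0 d)"
  interpret prob_space ?P by (rule prob_merw)
  let ?S = "\<lambda>\<sigma>::real. {w \<in> space ?P. t \<le> \<sigma> * ZZ d i n w - \<sigma> * ZZ d i m w}"
  have S: "?S \<sigma> \<in> sets ?P" for \<sigma> by measurable
  have b: "measure ?P (?S \<sigma>) \<le> exp (- (t\<^sup>2 / (2 * W)))" if "\<sigma> = 1 \<or> \<sigma> = -1" for \<sigma>
    using tail_one[OF d i m mn t W V that] by (simp add: emeasure_eq_measure)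
  have "{w \<in> space ?P. t \<le> \<bar>ZZ d i n w - ZZ d i m w\<bar>} \<subseteq> ?S 1 \<union> ?S (-1)" by auto
  then have "measure ?P {w \<in> space ?P. t \<le> \<bar>ZZ d i n w - ZZ d i m w\<bar>} \<le> measure ?P (?S 1 \<union> ?S (-1))"
    using S by (intro finite_measure_mono) auto
  also have "\<dots> \<le> measure ?P (?S 1) + measure ?P (?S (-1))"
    using S by (intro measure_subadditive) auto
  also have "\<dots> \<le> 2 * exp (- (t\<^sup>2 / (2 * W)))" using b[of 1] b[of "-1"] by simp
  finally show ?thesis .
qed



lemma V_le: "1 \<le> m \<Longrightarrow> m \<le> n \<Longrightarrow> (\<Sum>k\<in>{m<..n}. 1 / real k) \<le> real (n - m) / real m"
proof -
  assume m: "1 \<le> m" and mn: "m \<le> n"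
  have "(\<Sum>k\<in>{m<..n}. 1 / real k) \<le> of_nat (card {m<..n}) * (1 / real m)"
    by (rule sum_bounded_above) (use m in \<open>auto intro!: divide_left_mono\<close>)
  then show ?thesis by simp
qed

lemma V_pow: "(\<Sum>k\<in>{1<..(2::nat)^j}. 1 / real k) \<le> real j"
proof (induction j)
  case 0 then show ?case by simp
next
  case (Suc j)
  have un: "{1<..(2::nat)^Suc j} = {1<..2^j} \<union> {2^j<..2^Suc j}" by auto
  have "(\<Sum>k\<in>{1<..(2::nat)^Suc j}. 1 / real k) = (\<Sum>k\<in>{1<..(2::nat)^j}. 1 / real k) + (\<Sum>k\<in>{2^j<..(2::nat)^Suc j}. 1 / real k)"
    unfolding un by (rule sum.union_disjoint) auto
  also have "(\<Sum>k\<in>{2^j<..(2::nat)^Suc j}. 1 / real k) \<le> real (2^Suc j - 2^j) / real ((2::nat)^j)"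
    by (rule V_le) auto
  also have "real (2^Suc j - 2^j) / real ((2::nat)^j) = 1" by simp
  finally show ?case using Suc by simp
qed

definition Aev :: "nat \<Rightarrow> nat \<Rightarrow> real \<Rightarrow> nat \<Rightarrow> (vec \<times> (nat \<Rightarrow> nat \<times> mat)) set" where
  "Aev d i e k = {w \<in> space (merw_space d (p0 d)). e * k \<le> \<bar>ZZ d i (2^k) w - ZZ d i 1 w\<bar>}"

definition Bev :: "nat \<Rightarrow> nat \<Rightarrow> real \<Rightarrow> nat \<Rightarrow> nat \<Rightarrow> (vec \<times> (nat \<Rightarrow> nat \<times> mat)) set" where
  "Bev d i e k n = {w \<in> space (merw_space d (p0 d)). e * k \<le> \<bar>ZZ d i n w - ZZ d i (2^k) w\<bar>}"

definition Cev :: "nat \<Rightarrow> nat \<Rightarrow> real \<Rightarrow> nat \<Rightarrow> (vec \<times> (nat \<Rightarrow> nat \<times> mat)) set" where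
  "Cev d i e k = Aev d i e k \<union> (\<Union>n\<in>{2^k..<2^Suc k}. Bev d i e k n)"

lemma Cev_sets: "Cev d i e k \<in> sets (merw_space d (p0 d))"
  unfolding Cev_def Aev_def Bev_def by measurable

lemma Cev_bound:
  assumes d: "d \<ge> 1" and i: "i < d" and e: "e > 0" and k: "k \<ge> 1"
  shows "measure (merw_space d (p0 d)) (Cev d i e k) \<le> 2 * exp (- (e\<^sup>2 / 2)) ^ k + 2 ^ k * (2 * exp (- ((e * k)\<^sup>2 / 2)))"
proof -
  let ?P = "merw_space d (p0 d)"
  interpret prob_space ?P by (rule prob_merw)
  have t: "e * k > 0" using e k by simp
  have Ab: "measure ?P (Aev d i e k) \<le> 2 * exp (- ((e * k)\<^sup>2 / (2 * real k)))"
    unfolding Aev_def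
    by (rule tail_abs[OF d i _ _ t]) (use k V_pow[of k] in auto)
  also have "(e * k)\<^sup>2 / (2 * real k) = real k * (e\<^sup>2 / 2)" using k by (simp add: power2_eq_square field_simps)
  also have "exp (- (real k * (e\<^sup>2 / 2))) = exp (- (e\<^sup>2 / 2)) ^ k"
    by (simp add: exp_of_nat_mult[symmetric])
  finally have A: "measure ?P (Aev d i e k) \<le> 2 * exp (- (e\<^sup>2 / 2)) ^ k" .
  have Bb: "measure ?P (Bev d i e k n) \<le> 2 * exp (- ((e * k)\<^sup>2 / (2 * 1)))" if n: "n \<in> {2^k..<2^Suc k}" for n
    unfolding Bev_def
  proof (rule tail_abs[OF d i _ _ t])
    have "(\<Sum>j\<in>{2^k<..n}. 1 / real j) \<le> real (n - 2^k) / real ((2::nat)^k)"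
      by (rule V_le) (use n in auto)
    also have "\<dots> \<le> 1"
    proof -
      have "n \<le> 2 * 2^k" using n by simp
      then have "real n \<le> 2 * 2^k" using of_nat_le_iff[of n "2*2^k", where 'a=real] by simp
      then show ?thesis using n by (simp add: of_nat_diff)
    qed
    finally show "(\<Sum>j\<in>{2^k<..n}. 1 / real j) \<le> 1" .
  qed (use n in auto)
  have "measure ?P (Cev d i e k) \<le> measure ?P (Aev d i e k) + measure ?P (\<Union>n\<in>{2^k..<2^Suc k}. Bev d i e k n)"
  proof -
    have sA: "Aev d i e k \<in> sets ?P" unfolding Aev_def by measurable
    have sB: "Bev d i e k n \<in> sets ?P" for n unfolding Bev_def by measurable
    have sU: "(\<Union>n\<in>{2^k..<2^Suc k}. Bev d i e k n) \<in> sets ?P"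
      using sB by (intro sets.finite_UN) auto
    show ?thesis unfolding Cev_def
      by (rule measure_subadditive[OF sA sU]) (simp_all add: emeasure_eq_measure)
  qed
  also have "measure ?P (\<Union>n\<in>{2^k..<2^Suc k}. Bev d i e k n) \<le> (\<Sum>n\<in>{2^k..<2^Suc k}. measure ?P (Bev d i e k n))"
    by (rule finite_measure_subadditive_finite) (auto simp: Bev_def)
  also have "\<dots> \<le> (\<Sum>n\<in>{(2::nat)^k..<2^Suc k}. 2 * exp (- ((e * k)\<^sup>2 / 2)))"
    by (rule sum_mono) (use Bb in simp)
  also have "\<dots> = 2 ^ k * (2 * exp (- ((e * k)\<^sup>2 / 2)))" by simp
  finally show ?thesis using A by simp
qed

lemma Cev_summable:
  assumes d: "d \<ge> 1" and i: "i < d" and e: "e > 0"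
  shows "summable (\<lambda>k. measure (merw_space d (p0 d)) (Cev d i e k))"
proof -
  obtain K :: nat where K: "real K \<ge> 4 / e\<^sup>2" using real_arch_simple by blast
  define q1 where "q1 = exp (- (e\<^sup>2 / 2))"
  define q2 where "q2 = 2 * exp (- 2::real)"
  have q1: "\<bar>q1\<bar> < 1" using e by (simp add: q1_def)
  have q2: "\<bar>q2\<bar> < 1"
  proof -
    have "3 \<le> exp (2::real)" using exp_ge_add_one_self[of "2::real"] by simp
    then have "2 * exp (- 2::real) < 1" by (simp add: exp_minus field_simps)
    then show ?thesis by (simp add: q2_def)
  qed
  have sg: "summable (\<lambda>k. 2 * q1 ^ k + 2 * q2 ^ k)"
    using q1 q2 by (intro summable_add summable_mult summable_geometric) auto
  show ?thesis
  proof (rule summable_comparison_test'[OF sg])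
    fix k assume k: "k \<ge> Suc K"
    have k1: "k \<ge> 1" using k by simp
    have "e\<^sup>2 * real k \<ge> 4"
    proof -
      have "e\<^sup>2 * real k \<ge> e\<^sup>2 * (4 / e\<^sup>2)" using K k e
        by (intro mult_left_mono) auto
      then show ?thesis using e by simp
    qed
    then have "(e * k)\<^sup>2 / 2 \<ge> 2 * real k"
      using k1 by (simp add: power2_eq_square field_simps)
    then have "exp (- ((e * k)\<^sup>2 / 2)) \<le> exp (real k * (- 2))" by simp
    also have "\<dots> = exp (- 2) ^ k" by (rule exp_of_nat_mult)
    finally have "2 ^ k * (2 * exp (- ((e * k)\<^sup>2 / 2))) \<le> 2 ^ k * (2 * exp (- 2) ^ k)"
      by (intro mult_left_mono) auto
    also have "\<dots> = 2 * q2 ^ k" by (simp add: q2_def power_mult_distrib)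
    finally have "2 ^ k * (2 * exp (- ((e * k)\<^sup>2 / 2))) \<le> 2 * q2 ^ k" .
    then have "measure (merw_space d (p0 d)) (Cev d i e k) \<le> 2 * q1 ^ k + 2 * q2 ^ k"
      using Cev_bound[OF d i e k1] unfolding q1_def by linarith
    then show "norm (measure (merw_space d (p0 d)) (Cev d i e k)) \<le> 2 * q1 ^ k + 2 * q2 ^ k"
      by simp
  qed
qed

lemma Cev_AE:
  assumes d: "d \<ge> 1" and i: "i < d" and e: "e > 0"
  shows "AE w in merw_space d (p0 d). eventually (\<lambda>k. w \<in> space (merw_space d (p0 d)) - Cev d i e k) sequentially"
proof -
  interpret prob_space "merw_space d (p0 d)" by (rule prob_merw)
  show ?thesis
    by (rule borel_cantelli_AE1[OF Cev_sets _ Cev_summable[OF d i e]]) (simp add: less_top[symmetric])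
qed

lemma coord_growth:
  assumes d: "d \<ge> 1" and i: "i < d" and e: "e > 0"
  shows "AE w in merw_space d (p0 d). \<exists>N. \<forall>n\<ge>N. \<bar>ZZ d i n w\<bar> \<le> \<bar>ZZ d i 1 w\<bar> + 2 * e * log 2 n"
  using Cev_AE[OF d i e]
proof eventually_elim
  case (elim w)
  then obtain K where K: "\<And>k. k \<ge> K \<Longrightarrow> w \<in> space (merw_space d (p0 d)) - Cev d i e k"
    unfolding eventually_sequentially by blast
  have "\<forall>n\<ge>2^K. \<bar>ZZ d i n w\<bar> \<le> \<bar>ZZ d i 1 w\<bar> + 2 * e * log 2 n"
  proof (intro allI impI)
    fix n :: nat assume n: "n \<ge> 2^K"
    then have n1: "n \<ge> 1" using one_le_power[of "2::nat" K] by linarith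
    obtain k where k: "2^k \<le> n" "n < 2^(k+1)" using ex_power_ivl1[of 2 n] n1 by auto
    have "2^K < (2::nat)^(k+1)" using n k by linarith
    then have "K < k + 1" using power_less_imp_less_exp[of "2::nat" K "k+1"] by simp
    then have kK: "K \<le> k" by simp
    have wC: "w \<in> space (merw_space d (p0 d))" "w \<notin> Cev d i e k" using K[OF kK] by auto
    have a: "\<bar>ZZ d i (2^k) w - ZZ d i 1 w\<bar> < e * k"
      using wC unfolding Cev_def Aev_def by auto
    have b: "\<bar>ZZ d i n w - ZZ d i (2^k) w\<bar> < e * k"
    proof -
      have "n \<in> {2^k..<2^Suc k}" using k by simp
      then have "w \<notin> Bev d i e k n" using wC unfolding Cev_def by blast
      then show ?thesis using wC(1) unfolding Bev_def by auto
    qed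
    have lg: "real k \<le> log 2 n"
    proof -
      have "real n \<ge> 2 ^ k" using k(1) by (metis of_nat_le_iff of_nat_numeral of_nat_power)
      then have "log 2 (2 ^ k) \<le> log 2 n" by (intro log_mono) auto
      then show ?thesis by simp
    qed
    have "\<bar>ZZ d i n w\<bar> \<le> \<bar>ZZ d i 1 w\<bar> + 2 * (e * k)" using a b by linarith
    also have "\<dots> \<le> \<bar>ZZ d i 1 w\<bar> + 2 * e * log 2 n" using lg e by simp
    finally show "\<bar>ZZ d i n w\<bar> \<le> \<bar>ZZ d i 1 w\<bar> + 2 * e * log 2 n" .
  qed
  then show ?case by blast
qed



lemma det_limit:
  fixes f g :: "nat \<Rightarrow> real" and K :: real
  assumes ev: "\<And>r::nat. eventually (\<lambda>n. f n \<le> g n + K / real (Suc r)) sequentially"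
    and nn: "eventually (\<lambda>n. f n \<ge> 0) sequentially"
    and g: "g \<longlonglongrightarrow> 0"
  shows "f \<longlonglongrightarrow> 0"
proof (rule tendstoI)
  fix \<delta> :: real assume \<delta>: "\<delta> > 0"
  obtain r :: nat where r: "real r \<ge> 2 * \<bar>K\<bar> / \<delta>" using real_arch_simple by blast
  have Kr: "K / real (Suc r) < \<delta> / 2"
  proof -
    have "2 * \<bar>K\<bar> < \<delta> * real (Suc r)"
      using r \<delta> by (simp add: field_simps)
    then show ?thesis by (simp add: field_simps)
  qed
  have "eventually (\<lambda>n. dist (g n) 0 < \<delta> / 2) sequentially"
    using g \<delta> by (intro tendstoD) auto
  then show "eventually (\<lambda>n. dist (f n) 0 < \<delta>) sequentially"
    using ev[of r] nn
  proof eventually_elim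
    case (elim n)
    then have "\<bar>g n\<bar> < \<delta> / 2" by (simp add: dist_real_def)
    then have "f n < \<delta>" using Kr elim(2) by linarith
    then show ?case using elim(3) by (simp add: dist_real_def)
  qed
qed

lemma gam_le: "n \<ge> 1 \<Longrightarrow> gam n \<le> sqrt (2 * real n)"
proof -
  assume n: "n \<ge> 1"
  have "(gam n)\<^sup>2 \<le> 2 * real n" using gam_bounds[OF n] by simp
  then have "sqrt ((gam n)\<^sup>2) \<le> sqrt (2 * real n)" by (rule real_sqrt_le_mono)
  then show ?thesis using gam_pos[of n] by simp
qed

lemma coord_limit:
  assumes d: "d \<ge> 1" and i: "i < d"
  shows "AE w in merw_space d (p0 d). (\<lambda>n. \<bar>merw_pos d w n i\<bar> / (sqrt (real n) * ln (real n))) \<longlonglongrightarrow> 0"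
proof -
  have "AE w in merw_space d (p0 d). \<forall>r::nat. \<exists>N. \<forall>n\<ge>N. \<bar>ZZ d i n w\<bar> \<le> \<bar>ZZ d i 1 w\<bar> + 2 * (1 / real (Suc r)) * log 2 n"
  proof -
    have "AE w in merw_space d (p0 d). \<exists>N. \<forall>n\<ge>N. \<bar>ZZ d i n w\<bar> \<le> \<bar>ZZ d i 1 w\<bar> + 2 * (1 / real (Suc r)) * log 2 n" for r :: nat
      using coord_growth[OF d i, of "1 / real (Suc r)"] by simp
    then show ?thesis by (simp only: AE_all_countable) blast
  qed
  then show ?thesis
  proof eventually_elim
    case (elim w)
    define c where "c = \<bar>ZZ d i 1 w\<bar>"
    define K where "K = 2 * sqrt 2 / ln 2"
    show ?case
    proof (rule det_limit[where g = "\<lambda>n. sqrt 2 * c / ln (real n)" and K = K])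
      fix r :: nat
      obtain N where N: "\<And>n. n \<ge> N \<Longrightarrow> \<bar>ZZ d i n w\<bar> \<le> c + 2 * (1 / real (Suc r)) * log 2 n"
        using elim unfolding c_def by blast
      show "eventually (\<lambda>n. \<bar>merw_pos d w n i\<bar> / (sqrt (real n) * ln (real n)) \<le> sqrt 2 * c / ln (real n) + K / real (Suc r)) sequentially"
        unfolding eventually_sequentially
      proof (intro exI[of _ "max N 3"] allI impI)
        fix n assume n: "n \<ge> max N 3"
        have n1: "n \<ge> 1" using n by simp
        have ln: "ln (real n) > 0" using n by simp
        have sq: "sqrt (real n) > 0" using n by simp
        have "\<bar>merw_pos d w n i\<bar> = \<bar>ZZ d i n w\<bar> * gam n"
          using gam_pos[of n] by (simp add: ZZ_def abs_mult)
        also have "\<dots> \<le> (c + 2 * (1 / real (Suc r)) * log 2 n) * sqrt (2 * real n)"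
          using N[of n] n gam_le[OF n1] gam_pos[of n] by (intro mult_mono) auto
        finally have "\<bar>merw_pos d w n i\<bar> / (sqrt (real n) * ln (real n)) \<le>
            (c + 2 * (1 / real (Suc r)) * log 2 n) * sqrt (2 * real n) / (sqrt (real n) * ln (real n))"
          using ln sq by (intro divide_right_mono) auto
        also have "\<dots> = sqrt 2 * c / ln (real n) + K / real (Suc r)"
          using ln sq by (simp add: K_def log_def real_sqrt_mult field_simps)
        finally show "\<bar>merw_pos d w n i\<bar> / (sqrt (real n) * ln (real n)) \<le> sqrt 2 * c / ln (real n) + K / real (Suc r)" .
      qed
    next
      show "eventually (\<lambda>n. \<bar>merw_pos d w n i\<bar> / (sqrt (real n) * ln (real n)) \<ge> 0) sequentially"
        unfolding eventually_sequentially by (intro exI[of _ 1]) auto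
    next
      show "(\<lambda>n. sqrt 2 * c / ln (real n)) \<longlonglongrightarrow> 0" by real_asymp
    qed
  qed
qed



theorem theorem3p4:
  fixes d :: nat
  assumes "d \<ge> 1"
  shows "AE w in merw_space d ((2 * real d + 1) / (4 * real d)).
           (\<lambda>n. vnorm d (merw_pos d w n) / (sqrt (real n) * ln (real n))) \<longlonglongrightarrow> 0"
proof -
  have "AE w in merw_space d (p0 d). i < d \<longrightarrow> (\<lambda>n. \<bar>merw_pos d w n i\<bar> / (sqrt (real n) * ln (real n))) \<longlonglongrightarrow> 0" for i
  proof (cases "i < d")
    case True then show ?thesis using coord_limit[OF assms True] by simp
  qed simp
  then have "AE w in merw_space d (p0 d). \<forall>i. i < d \<longrightarrow> (\<lambda>n. \<bar>merw_pos d w n i\<bar> / (sqrt (real n) * ln (real n))) \<longlonglongrightarrow> 0"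
    by (simp only: AE_all_countable) blast
  then show ?thesis
  proof eventually_elim
    case (elim w)
    let ?S = "merw_pos d w"
    have sum0: "(\<lambda>n. \<Sum>i<d. \<bar>?S n i\<bar> / (sqrt (real n) * ln (real n))) \<longlonglongrightarrow> 0"
      using elim by (intro tendsto_null_sum) auto
    show ?case
    proof (rule Lim_null_comparison[OF _ sum0])
      show "eventually (\<lambda>n. norm (vnorm d (?S n) / (sqrt (real n) * ln (real n))) \<le>
               (\<Sum>i<d. \<bar>?S n i\<bar> / (sqrt (real n) * ln (real n)))) sequentially"
        unfolding eventually_sequentially
      proof (intro exI[of _ 1] allI impI)
        fix n :: nat assume n: "n \<ge> 1"
        have x: "sqrt (real n) * ln (real n) \<ge> 0" using n by simp
        have v: "vnorm d (?S n) \<ge> 0" by (simp add: vnorm_def sum_nonneg)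
        have "vnorm d (?S n) \<le> (\<Sum>i<d. \<bar>?S n i\<bar>)"
          unfolding vnorm_def using L2_set_le_sum_abs[of "?S n" "{..<d}"] by (simp add: L2_set_def)
        then have "vnorm d (?S n) / (sqrt (real n) * ln (real n)) \<le> (\<Sum>i<d. \<bar>?S n i\<bar>) / (sqrt (real n) * ln (real n))"
          using x by (rule divide_right_mono)
        then show "norm (vnorm d (?S n) / (sqrt (real n) * ln (real n))) \<le>
               (\<Sum>i<d. \<bar>?S n i\<bar> / (sqrt (real n) * ln (real n)))"
          using x v by (simp add: sum_divide_distrib)
      qed
    qed
  qed
qed

end
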